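(* Let $a\ge b\ge1$ be integers and define integers $c_j,d_j$ ($j\in\mathbb Z_+$) by $c_0=d_0=0$, $c_1=d_1=1$, $c_{k+2}+c_k=a d_{k+1}$, $d_{k+2}+d_k=b c_{k+1}$. Then for all $j\in\mathbb Z_+$ we have $c_{2j+1}=d_{2j+1}$ and $c_{2j}=\frac{a}{b}d_{2j}$.
   Context: $\mathbb Z_+=\{0,1,2,\dots\}$. *)

theory Defs
  imports Complex_Main
begin

end

theory Submission
  imports Defs
begin

theorem lemma2p5:
  fixes a b :: int and c d :: "nat \<Rightarrow> int"
  assumes "a \<ge> b" and "b \<ge> 1"
    and "c 0 = 0" and "d 0 = 0" and "c 1 = 1" and "d 1 = 1"
    and "\<And>k. c (k + 2) + c k = a * d (k + 1)"
    and "\<And>k. d (k + 2) + d k = b * c (k + 1)"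
  shows "\<forall>j. c (2 * j + 1) = d (2 * j + 1) \<and>
              real_of_int (c (2 * j)) = real_of_int a / real_of_int b * real_of_int (d (2 * j))"
proof -
  define Q where "Q n \<longleftrightarrow> (odd n \<longrightarrow> c n = d n) \<and> (even n \<longrightarrow> b * c n = a * d n)" for n
  have key: "Q n \<and> Q (Suc n)" for n
  proof (induction n)
    case 0
    then show ?case using assms by (simp add: Q_def)
  next
    case (Suc n)
    have r1: "c (n + 2) = a * d (n + 1) - c n" using assms(7)[of n] by simp
    have r2: "d (n + 2) = b * c (n + 1) - d n" using assms(8)[of n] by simp
    have "Q (n + 2)"
    proof (cases "even n")
      case True
      then have "b * c n = a * d n" "c (n+1) = d (n+1)" using Suc by (auto simp: Q_def)
      then have "b * c (n+2) = a * d (n+2)" unfolding r1 r2 by (simp add: algebra_simps)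
      then show ?thesis using True by (simp add: Q_def)
    next
      case False
      then have "c n = d n" "b * c (n+1) = a * d (n+1)" using Suc by (auto simp: Q_def)
      then have "c (n+2) = d (n+2)" unfolding r1 r2 by (simp add: algebra_simps)
      then show ?thesis using False by (simp add: Q_def)
    qed
    then show ?case using Suc by simp
  qed
  show ?thesis
  proof
    fix j
    have "Q (2*j)" "Q (2*j+1)" using key by auto
    then have e: "c (2*j+1) = d (2*j+1)" "b * c (2*j) = a * d (2*j)" by (auto simp: Q_def)
    have "real_of_int b * c (2*j) = real_of_int a * d (2*j)" using e(2) by (metis of_int_mult)
    moreover have "real_of_int b \<noteq> 0" using assms(2) by simp
    ultimately have "real_of_int (c (2*j)) = real_of_int a / real_of_int b * real_of_int (d (2*j))"
      by (simp add: field_simps)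
    then show "c (2 * j + 1) = d (2 * j + 1) \<and>
              real_of_int (c (2 * j)) = real_of_int a / real_of_int b * real_of_int (d (2 * j))"
      using e(1) by simp
  qed
qed

end
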